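(* Let $X$ be a real normed linear space which admits a predual ${}^*X$ (a normed space with $({}^*X)^* \simeq X$), and let $S \subset X$ be a closed subspace. Then the statement "for every $y \in X$, the infimum $\inf_{x \in S} \|y - x\|$ is attained by some $x\in S$ and \[ \min_{x \in S} \|y - x\| \;=\; \sup_{\substack{\nu \in {}^\perp S \\ \|\nu\| \leq 1}} \langle \nu, y\rangle\text{"} \] holds if and only if $({}^\perp S)^\perp = S$.
   Context: A predual of a normed space $X$ is a normed space ${}^*X$ with $({}^*X)^* \simeq X$; via this isomorphism every $x \in X$ acts on ${}^*X$, with pairing written $\langle \nu, x\rangle$ for $\nu \in {}^*X$, $x \in X$. For $S \subset X$, the pre-annihilator is ${}^\perp S = \{\nu \in {}^*X : \langle \nu, x\rangle = 0 \ \forall x \in S\}$, and for $T \subset {}^*X$ its annihilator is $T^\perp = \{x \in X : \langle \nu, x\rangle = 0 \ \forall \nu \in T\}$ (identifying $({}^*X)^*$ with $X$). One always has $S \subset ({}^\perp S)^\perp$. *)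

theory Defs
  imports "HOL-Analysis.Analysis"
begin

(* A predual of X is modelled by a normed space 'y together with an isometric linear
  isomorphism T from X onto the dual space of bounded linear functionals on 'y.
  The pairing of nu with x is blinfun_apply (T x) nu. *)

definition is_predual_iso :: "('x::real_normed_vector \<Rightarrow> ('y::real_normed_vector \<Rightarrow>\<^sub>L real)) \<Rightarrow> bool" where
  "is_predual_iso T \<longleftrightarrow> linear T \<and> bij T \<and> (\<forall>x. norm (T x) = norm x)"

definition pre_annihilator ::
  "('x \<Rightarrow> ('y::real_normed_vector \<Rightarrow>\<^sub>L real)) \<Rightarrow> 'x set \<Rightarrow> 'y set" where
  "pre_annihilator T S = {\<nu>. \<forall>x\<in>S. blinfun_apply (T x) \<nu> = 0}"

definition annihilator ::
  "('x \<Rightarrow> ('y::real_normed_vector \<Rightarrow>\<^sub>L real)) \<Rightarrow> 'y set \<Rightarrow> 'x set" where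
  "annihilator T A = {x. \<forall>\<nu>\<in>A. blinfun_apply (T x) \<nu> = 0}"

end

theory Submission
  imports Defs
begin


definition hbg :: "('y::real_normed_vector) set \<Rightarrow> ('y \<Rightarrow> real) \<Rightarrow> real \<Rightarrow> ('y \<times> real) set \<Rightarrow> bool" where
 "hbg M f c G \<longleftrightarrow> (\<forall>v r s. (v,r)\<in>G \<longrightarrow> (v,s)\<in>G \<longrightarrow> r = s)
   \<and> (\<forall>v r w s. (v,r)\<in>G \<longrightarrow> (w,s)\<in>G \<longrightarrow> (v+w, r+s)\<in>G)
   \<and> (\<forall>v r a. (v,r)\<in>G \<longrightarrow> (a *\<^sub>R v, a*r)\<in>G)
   \<and> (\<forall>v\<in>M. (v, f v)\<in>G) \<and> (\<forall>v r. (v,r)\<in>G \<longrightarrow> r \<le> c * norm v)"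

lemma hbgD:
  assumes "hbg M f c G"
  shows hbg_sv: "(v,r)\<in>G \<Longrightarrow> (v,s)\<in>G \<Longrightarrow> r = s"
    and hbg_ad: "(v,r)\<in>G \<Longrightarrow> (w,s)\<in>G \<Longrightarrow> (v+w, r+s)\<in>G"
    and hbg_sc: "(v,r)\<in>G \<Longrightarrow> (a *\<^sub>R v, a*r)\<in>G"
    and hbg_fM: "u\<in>M \<Longrightarrow> (u, f u)\<in>G"
    and hbg_bd: "(v,r)\<in>G \<Longrightarrow> r \<le> c * norm v"
  using assms unfolding hbg_def by blast+

lemma hbgI:
  assumes "\<And>v r s. (v,r)\<in>G \<Longrightarrow> (v,s)\<in>G \<Longrightarrow> r = s"
    and "\<And>v r w s. (v,r)\<in>G \<Longrightarrow> (w,s)\<in>G \<Longrightarrow> (v+w, r+s)\<in>G"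
    and "\<And>v r a. (v,r)\<in>G \<Longrightarrow> (a *\<^sub>R v, a*r)\<in>G"
    and "\<And>u. u\<in>M \<Longrightarrow> (u, f u)\<in>G"
    and "\<And>v r. (v,r)\<in>G \<Longrightarrow> r \<le> c * norm v"
  shows "hbg M f c G"
  using assms unfolding hbg_def by blast

lemma hbg_chain:
  assumes C: "C \<in> chains {G. hbg M f c G}" and ne: "C \<noteq> {}"
  shows "hbg M f c (\<Union>C)"
proof -
  have sub: "\<And>G. G \<in> C \<Longrightarrow> hbg M f c G" using C by (auto simp: chains_def)
  have ch: "\<And>A B. A\<in>C \<Longrightarrow> B\<in>C \<Longrightarrow> A \<subseteq> B \<or> B \<subseteq> A" using C by (auto simp: chains_def chain_subset_def)
  have two: "\<exists>G\<in>C. p \<in> G \<and> q \<in> G" if "p \<in> \<Union>C" "q \<in> \<Union>C" for p q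
  proof -
    from that obtain A B where "A\<in>C" "B\<in>C" "p\<in>A" "q\<in>B" by auto
    with ch[of A B] show ?thesis by auto
  qed
  obtain G0 where G0: "G0 \<in> C" using ne by auto
  show ?thesis
  proof (rule hbgI)
    fix v r s assume "(v,r)\<in>\<Union>C" "(v,s)\<in>\<Union>C"
    then obtain G where "G\<in>C" "(v,r)\<in>G" "(v,s)\<in>G" using two by blast
    then show "r = s" using hbg_sv[OF sub] by blast
  next
    fix v r w s assume "(v,r)\<in>\<Union>C" "(w,s)\<in>\<Union>C"
    then obtain G where "G\<in>C" "(v,r)\<in>G" "(w,s)\<in>G" using two by blast
    then show "(v+w,r+s) \<in> \<Union>C" using hbg_ad[OF sub] by blast
  next
    fix v r a assume "(v,r)\<in>\<Union>C"
    then obtain G where "G\<in>C" "(v,r)\<in>G" by blast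
    then show "(a *\<^sub>R v,a*r) \<in> \<Union>C" using hbg_sc[OF sub] by blast
  next
    fix v assume "v \<in> M" then show "(v, f v) \<in> \<Union>C" using G0 hbg_fM[OF sub] by blast
  next
    fix v r assume "(v,r)\<in>\<Union>C"
    then obtain G where "G\<in>C" "(v,r)\<in>G" by blast
    then show "r \<le> c * norm v" using hbg_bd[OF sub] by blast
  qed
qed


lemma hbg_extend:
  assumes G: "hbg M f c G" and M0: "0 \<in> M" and c0: "c \<ge> 0" and y0: "y0 \<notin> fst ` G"
  shows "\<exists>G'. hbg M f c G' \<and> G \<subset> G'"
proof -
  have sv: "\<And>v r s. (v,r)\<in>G \<Longrightarrow> (v,s)\<in>G \<Longrightarrow> r = s"
   and ad: "\<And>v r w s. (v,r)\<in>G \<Longrightarrow> (w,s)\<in>G \<Longrightarrow> (v+w, r+s)\<in>G"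
   and sc: "\<And>v r a. (v,r)\<in>G \<Longrightarrow> (a *\<^sub>R v, a*r)\<in>G"
   and fM: "\<And>v. v\<in>M \<Longrightarrow> (v, f v)\<in>G"
   and bd: "\<And>v r. (v,r)\<in>G \<Longrightarrow> r \<le> c * norm v"
    using hbgD[OF G] by blast+
  have key: "s - c * norm (u - y0) \<le> c * norm (w + y0) - q" if "(u,s)\<in>G" "(w,q)\<in>G" for u s w q
  proof -
    have "s + q \<le> c * norm (u + w)" using bd[OF ad[OF that]] .
    moreover note c0
    moreover have "norm (u + w) \<le> norm (u - y0) + norm (w + y0)"
      using norm_triangle_ineq[of "u - y0" "w + y0"] by simp
    ultimately have "s + q \<le> c * (norm (u - y0) + norm (w + y0))"
      by (smt (verit) mult_left_mono)
    then show ?thesis by (simp add: algebra_simps)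
  qed
  define L where "L = (\<lambda>(u,s). s - c * norm (u - y0)) ` G"
  have G00: "(0, 0) \<in> G" using sc[OF fM[OF M0], of 0] by simp
  have Lne: "L \<noteq> {}" using G00 unfolding L_def by auto
  have Lbdd: "bdd_above L" unfolding L_def bdd_above_def
    using key[OF _ G00] by (intro exI[of _ "c * norm y0"]) auto
  define a where "a = Sup L"
  have a1: "s - c * norm (u - y0) \<le> a" if "(u,s)\<in>G" for u s
    unfolding a_def by (rule cSup_upper[OF _ Lbdd]) (use that in \<open>auto simp: L_def\<close>)
  have a2: "a \<le> c * norm (w + y0) - q" if "(w,q)\<in>G" for w q
    unfolding a_def by (rule cSup_least[OF Lne]) (use that key in \<open>auto simp: L_def\<close>)
  define G' where "G' = {(v + t *\<^sub>R y0, r + t*a) | v r t. (v,r)\<in>G}"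
  have GG': "G \<subseteq> G'"
  proof
    fix p assume "p \<in> G"
    then obtain v r where p: "p = (v,r)" "(v,r)\<in>G" by (cases p) auto
    then have "(v + 0 *\<^sub>R y0, r + 0*a) \<in> G'" unfolding G'_def by blast
    then show "p \<in> G'" using p by simp
  qed
  have "(0 + 1 *\<^sub>R y0, 0 + 1*a) \<in> G'" unfolding G'_def using G00 by blast
  then have new: "(y0, a) \<in> G'" by simp
  have "(y0, a) \<notin> G" using y0 by (metis fst_conv image_eqI)
  have "hbg M f c G'"
  proof (rule hbgI)
    fix x r s assume "(x,r)\<in>G'" "(x,s)\<in>G'"
    then obtain v1 r1 t1 v2 r2 t2 where e: "x = v1 + t1 *\<^sub>R y0" "r = r1 + t1*a" "(v1,r1)\<in>G"
       "x = v2 + t2 *\<^sub>R y0" "s = r2 + t2*a" "(v2,r2)\<in>G" unfolding G'_def by blast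
    show "r = s"
    proof (cases "t1 = t2")
      case True
      then have "v1 = v2" using e by simp
      then show ?thesis using e True sv by blast
    next
      case False
      have "(v1 + (-1) *\<^sub>R v2, r1 + (-1)*r2) \<in> G" using ad[OF e(3) sc[OF e(6)]] .
      from sc[OF this, of "inverse (t2 - t1)"]
      have "(inverse (t2 - t1) *\<^sub>R (v1 - v2), inverse (t2 - t1) * (r1 - r2)) \<in> G" by simp
      moreover have "v1 - v2 = (t2 - t1) *\<^sub>R y0" using e by (simp add: algebra_simps)
      ultimately have "(y0, inverse (t2 - t1) * (r1 - r2)) \<in> G" using False by simp
      then show ?thesis using y0 by (metis fst_conv image_eqI)
    qed
  next
    fix x r w s assume "(x,r)\<in>G'" "(w,s)\<in>G'"
    then obtain v1 r1 t1 v2 r2 t2 where e: "x = v1 + t1 *\<^sub>R y0" "r = r1 + t1*a" "(v1,r1)\<in>G"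
       "w = v2 + t2 *\<^sub>R y0" "s = r2 + t2*a" "(v2,r2)\<in>G" unfolding G'_def by blast
    have "(v1+v2, r1+r2) \<in> G" using ad e by blast
    moreover have "x + w = (v1+v2) + (t1+t2) *\<^sub>R y0" "r + s = (r1+r2) + (t1+t2)*a"
      using e by (simp_all add: algebra_simps)
    ultimately show "(x+w, r+s) \<in> G'" unfolding G'_def by blast
  next
    fix x r b assume "(x,r)\<in>G'"
    then obtain v1 r1 t1 where e: "x = v1 + t1 *\<^sub>R y0" "r = r1 + t1*a" "(v1,r1)\<in>G"
       unfolding G'_def by blast
    have "(b *\<^sub>R v1, b*r1) \<in> G" using sc e by blast
    moreover have "b *\<^sub>R x = b *\<^sub>R v1 + (b*t1) *\<^sub>R y0" "b * r = b*r1 + (b*t1)*a"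
      using e by (simp_all add: algebra_simps)
    ultimately show "(b *\<^sub>R x, b*r) \<in> G'" unfolding G'_def by blast
  next
    fix v assume "v \<in> M" then show "(v, f v) \<in> G'" using fM GG' by blast
  next
    fix x r assume "(x,r)\<in>G'"
    then obtain v t q where e: "x = v + t *\<^sub>R y0" "r = q + t*a" "(v,q)\<in>G"
       unfolding G'_def by blast
    consider "t = 0" | "t > 0" | "t < 0" by linarith
    then show "r \<le> c * norm x"
    proof cases
      case 1 then show ?thesis using e bd by simp
    next
      case 2
      have "(inverse t *\<^sub>R v, inverse t * q) \<in> G" using sc e by blast
      from a2[OF this] have "a \<le> c * norm (inverse t *\<^sub>R v + y0) - inverse t * q" .
      also have "inverse t *\<^sub>R v + y0 = inverse t *\<^sub>R x" using e 2 by (simp add: algebra_simps)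
      finally have "t * a \<le> t * (c * (inverse t * norm x) - inverse t * q)"
        using 2 by (simp add: mult_left_mono)
      moreover have "t * (c * (inverse t * norm x) - inverse t * q) = c * norm x - q"
        using 2 by (simp add: field_simps)
      ultimately show ?thesis using e by simp
    next
      case 3
      have "(inverse (-t) *\<^sub>R v, inverse (-t) * q) \<in> G" using sc e by blast
      from a1[OF this] have "inverse (-t) * q - c * norm (inverse (-t) *\<^sub>R v - y0) \<le> a" .
      moreover have "inverse (-t) *\<^sub>R v - y0 = inverse (-t) *\<^sub>R x" using e 3 by (simp add: algebra_simps)
      ultimately have "inverse (-t) * q - c * (inverse (-t) * norm x) \<le> a" using 3 by simp
      then have "(-t) * (inverse (-t) * q - c * (inverse (-t) * norm x)) \<le> (-t) * a"
        using 3 by (simp add: mult_left_mono)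
      moreover have "(-t) * (inverse (-t) * q - c * (inverse (-t) * norm x)) = q - c * norm x"
        using 3 by (simp add: field_simps)
      ultimately show ?thesis using e by (simp add: algebra_simps)
    qed
  qed
  then show ?thesis using GG' new \<open>(y0, a) \<notin> G\<close> by blast
qed



lemma hahn_banach:
  fixes f :: "'y::real_normed_vector \<Rightarrow> real"
  assumes lf: "linear f" and M: "subspace M" and c0: "c \<ge> 0" and fb: "\<forall>v\<in>M. f v \<le> c * norm v"
  shows "\<exists>g. bounded_linear g \<and> (\<forall>v\<in>M. g v = f v) \<and> (\<forall>v. \<bar>g v\<bar> \<le> c * norm v)"
proof -
  have M0: "0 \<in> M" using M by (simp add: subspace_0)
  define G0 where "G0 = {(v, f v) | v. v \<in> M}"
  have hG0: "hbg M f c G0"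
  proof (rule hbgI)
    fix v r s assume "(v,r)\<in>G0" "(v,s)\<in>G0" then show "r = s" unfolding G0_def by auto
  next
    fix v r w s assume "(v,r)\<in>G0" "(w,s)\<in>G0"
    then have "v \<in> M" "w \<in> M" "r = f v" "s = f w" unfolding G0_def by auto
    moreover have "v + w \<in> M" using M \<open>v\<in>M\<close> \<open>w\<in>M\<close> by (simp add: subspace_add)
    ultimately show "(v+w, r+s) \<in> G0" unfolding G0_def using linear_add[OF lf] by auto
  next
    fix v r a assume "(v,r)\<in>G0"
    then have "v \<in> M" "r = f v" unfolding G0_def by auto
    moreover have "a *\<^sub>R v \<in> M" using M \<open>v\<in>M\<close> by (simp add: subspace_scale)
    ultimately show "(a *\<^sub>R v, a*r) \<in> G0" unfolding G0_def using linear_scale[OF lf] by auto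
  next
    fix u assume "u \<in> M" then show "(u, f u) \<in> G0" unfolding G0_def by auto
  next
    fix v r assume "(v,r)\<in>G0" then show "r \<le> c * norm v" unfolding G0_def using fb by auto
  qed
  have "\<forall>C\<in>chains {G. hbg M f c G}. \<exists>U\<in>{G. hbg M f c G}. \<forall>X\<in>C. X \<subseteq> U"
  proof
    fix C assume C: "C \<in> chains {G. hbg M f c G}"
    show "\<exists>U\<in>{G. hbg M f c G}. \<forall>X\<in>C. X \<subseteq> U"
    proof (cases "C = {}")
      case True then show ?thesis using hG0 by blast
    next
      case False then show ?thesis using hbg_chain[OF C False] by blast
    qed
  qed
  from Zorn_Lemma2[OF this] obtain Gm where Gm: "hbg M f c Gm"
    and mx: "\<And>X. hbg M f c X \<Longrightarrow> Gm \<subseteq> X \<Longrightarrow> X = Gm" by blast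
  have dom: "v \<in> fst ` Gm" for v
  proof (rule ccontr)
    assume "v \<notin> fst ` Gm"
    from hbg_extend[OF Gm M0 c0 this] obtain G' where "hbg M f c G'" "Gm \<subset> G'" by blast
    with mx show False by blast
  qed
  define g where "g v = (THE r. (v,r) \<in> Gm)" for v
  have geq: "g v = r" if "(v,r) \<in> Gm" for v r
    unfolding g_def using that hbg_sv[OF Gm] by blast
  have gin: "(v, g v) \<in> Gm" for v
  proof -
    obtain r where "(v,r) \<in> Gm" using dom[of v] by force
    then show ?thesis using geq by simp
  qed
  have gadd: "g (v + w) = g v + g w" for v w using geq[OF hbg_ad[OF Gm gin gin]] .
  have gsc: "g (a *\<^sub>R v) = a *\<^sub>R g v" for a v using geq[OF hbg_sc[OF Gm gin]] by simp
  have gb: "g v \<le> c * norm v" for v using hbg_bd[OF Gm gin] .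
  have gabs: "\<bar>g v\<bar> \<le> c * norm v" for v
  proof -
    have "g (-v) = - g v" using gsc[of "-1" v] by simp
    then show ?thesis using gb[of v] gb[of "-v"] by simp
  qed
  have "bounded_linear g"
    by (rule bounded_linear_intro[where K=c]) (use gadd gsc gabs in \<open>auto simp: mult.commute\<close>)
  moreover have "\<forall>v\<in>M. g v = f v" using geq hbg_fM[OF Gm] by blast
  ultimately show ?thesis using gabs by blast
qed



theorem theorem4:
  fixes T :: "'x::real_normed_vector \<Rightarrow> ('y::real_normed_vector \<Rightarrow>\<^sub>L real)"
    and S :: "'x set"
  assumes "is_predual_iso T"
    and "subspace S" and "closed S"
  shows "(\<forall>y. \<exists>x\<in>S. (\<forall>x'\<in>S. norm (y - x) \<le> norm (y - x')) \<and>
            norm (y - x) = (SUP \<nu>\<in>{\<nu>\<in>pre_annihilator T S. norm \<nu> \<le> 1}. blinfun_apply (T y) \<nu>))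
         \<longleftrightarrow> annihilator T (pre_annihilator T S) = S"
proof -
  have lT: "linear T" and bT: "bij T" and nT: "\<And>x. norm (T x) = norm x"
    using assms(1) unfolding is_predual_iso_def by auto
  define A where "A = pre_annihilator T S"
  define B where "B = {\<nu>\<in>A. norm \<nu> \<le> 1}"
  have A0: "0 \<in> B" unfolding B_def A_def pre_annihilator_def by (simp add: blinfun.zero_right)
  have SA: "S \<subseteq> annihilator T A" unfolding A_def annihilator_def pre_annihilator_def by auto
  have Tdiff: "blinfun_apply (T (a - b)) \<nu> = blinfun_apply (T a) \<nu> - blinfun_apply (T b) \<nu>" for a b \<nu>
    by (simp add: linear_diff[OF lT] blinfun.diff_left)
  have bdd: "bdd_above ((\<lambda>\<nu>. blinfun_apply (T y) \<nu>) ` B)" for y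
  proof (rule bdd_aboveI2)
    fix \<nu> assume "\<nu> \<in> B"
    have "blinfun_apply (T y) \<nu> \<le> norm (T y) * norm \<nu>"
      using norm_blinfun[of "T y" \<nu>] by simp
    also have "\<dots> \<le> norm (T y) * 1" using \<open>\<nu>\<in>B\<close> unfolding B_def by (intro mult_left_mono) auto
    finally show "blinfun_apply (T y) \<nu> \<le> norm (T y)" by simp
  qed
  show ?thesis unfolding A_def[symmetric] B_def[symmetric]
  proof
    assume H: "\<forall>y. \<exists>x\<in>S. (\<forall>x'\<in>S. norm (y - x) \<le> norm (y - x')) \<and>
            norm (y - x) = (SUP \<nu>\<in>B. blinfun_apply (T y) \<nu>)"
    show "annihilator T A = S"
    proof
      show "annihilator T A \<subseteq> S"
      proof
        fix y assume y: "y \<in> annihilator T A"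
        from H obtain x where x: "x \<in> S" "norm (y - x) = (SUP \<nu>\<in>B. blinfun_apply (T y) \<nu>)" by blast
        have "(SUP \<nu>\<in>B. blinfun_apply (T y) \<nu>) = (SUP \<nu>\<in>B. (0::real))"
          by (rule SUP_cong) (use y in \<open>auto simp: B_def annihilator_def\<close>)
        also have "\<dots> = 0" using A0 by (subst cSUP_const) auto
        finally have "y = x" using x by simp
        then show "y \<in> S" using x by simp
      qed
    qed (rule SA)
  next
    assume E: "annihilator T A = S"
    show "\<forall>y. \<exists>x\<in>S. (\<forall>x'\<in>S. norm (y - x) \<le> norm (y - x')) \<and>
            norm (y - x) = (SUP \<nu>\<in>B. blinfun_apply (T y) \<nu>)"
    proof
      fix y
      define c where "c = (SUP \<nu>\<in>B. blinfun_apply (T y) \<nu>)"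
      have up: "blinfun_apply (T y) \<nu> \<le> c" if "\<nu> \<in> B" for \<nu>
        unfolding c_def using bdd that by (rule cSUP_upper2) simp
      have c0: "c \<ge> 0" using up[OF A0] by (simp add: blinfun.zero_right)
      have subA: "subspace A" unfolding subspace_def A_def pre_annihilator_def
        by (simp add: blinfun.zero_right blinfun.add_right blinfun.scaleR_right)
      have fb: "\<forall>\<nu>\<in>A. blinfun_apply (T y) \<nu> \<le> c * norm \<nu>"
      proof
        fix \<nu> assume "\<nu> \<in> A"
        show "blinfun_apply (T y) \<nu> \<le> c * norm \<nu>"
        proof (cases "\<nu> = 0")
          case True then show ?thesis by (simp add: blinfun.zero_right)
        next
          case False
          have "inverse (norm \<nu>) *\<^sub>R \<nu> \<in> B"
            using subspace_scale[OF subA \<open>\<nu>\<in>A\<close>] False unfolding B_def by simp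
          from up[OF this] have "inverse (norm \<nu>) * blinfun_apply (T y) \<nu> \<le> c"
            by (simp add: blinfun.scaleR_right)
          then have "norm \<nu> * (inverse (norm \<nu>) * blinfun_apply (T y) \<nu>) \<le> norm \<nu> * c"
            by (intro mult_left_mono) auto
          then show ?thesis using False by (simp add: field_simps)
        qed
      qed
      have lin: "linear (blinfun_apply (T y))"
        using blinfun.bounded_linear_right bounded_linear.linear by blast
      from hahn_banach[OF lin subA c0 fb] obtain g where g: "bounded_linear g"
        "\<forall>v\<in>A. g v = blinfun_apply (T y) v" "\<And>v. \<bar>g v\<bar> \<le> c * norm v" by blast
      define z where "z = inv T (Blinfun g)"
      have Tz: "T z = Blinfun g" unfolding z_def using bT by (simp add: bij_is_surj surj_f_inv_f)
      have Tza: "blinfun_apply (T z) = g" using Tz bounded_linear_Blinfun_apply[OF g(1)] by simp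
      have nz: "norm z \<le> c"
        unfolding nT[symmetric] by (rule norm_blinfun_bound[OF c0]) (use Tza g(3) in simp)
      define x where "x = y - z"
      have xS: "x \<in> S" unfolding E[symmetric] annihilator_def x_def
        using Tdiff Tza g(2) by simp
      have low: "c \<le> norm (y - x')" if "x' \<in> S" for x'
        unfolding c_def
      proof (rule cSUP_least)
        show "B \<noteq> {}" using A0 by blast
      next
        fix \<nu> assume "\<nu> \<in> B"
        then have "blinfun_apply (T x') \<nu> = 0" "norm \<nu> \<le> 1"
          using that unfolding B_def A_def pre_annihilator_def by auto
        then have "blinfun_apply (T y) \<nu> = blinfun_apply (T (y - x')) \<nu>" using Tdiff by simp
        also have "\<dots> \<le> norm (T (y - x')) * norm \<nu>" using norm_blinfun[of "T (y - x')" \<nu>] by simp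
        also have "\<dots> \<le> norm (T (y - x')) * 1" using \<open>norm \<nu> \<le> 1\<close> by (intro mult_left_mono) auto
        finally show "blinfun_apply (T y) \<nu> \<le> norm (y - x')" using nT by simp
      qed
      have "norm (y - x) = c" using low[OF xS] nz unfolding x_def by simp
      then show "\<exists>x\<in>S. (\<forall>x'\<in>S. norm (y - x) \<le> norm (y - x')) \<and> norm (y - x) = c"
        using xS low by auto
    qed
  qed
qed

end
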